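(* Let $k\in\mathbb{Z}$ and $z\in\mathbb{C}\setminus\{0,-1/e\}$ (with $z$ in the domain of $W_k$). Then $$|W_k'(z)| \le \frac{1}{|z|}\max\left(3, \frac{1.5}{\sqrt{|ez+1|}}\right).$$
   Context: $W_k$ denotes the $k$-th branch of the Lambert $W$ function (inverse of $w\mapsto we^w$) in the standard convention of Corless, Gonnet, Hare, Jeffrey and Knuth (1996). On a branch cut, values are defined by continuity from the upper half plane and $W_k'$ denotes the derivative of the fixed branch $W_k$ (directional derivative along the cut there); $W'(z)=\frac{1}{z}\frac{W(z)}{1+W(z)}$. *)

theory Defs
  imports "HOL-Analysis.Analysis"
begin

text \<open>Range of the k-th branch of Lambert W (Corless, Gonnet, Hare, Jeffrey, Knuth 1996).
  The boundaries between ranges are the curves x = - y cot y (images of the branch cut),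
  together with the ray (-inf,-1] separating W_1 and W_{-1}.  Each branch owns its upper
  boundary (counter-clockwise continuity = continuity from the upper half plane on the cut).\<close>

definition LambertW_range :: "int \<Rightarrow> complex set" where
  "LambertW_range k = {w. let x = Re w; y = Im w in
     (if k = 0 then
        (-pi < y \<and> y < 0 \<and> x > - y * cot y) \<or>
        (y = 0 \<and> x \<ge> -1) \<or>
        (0 < y \<and> y < pi \<and> x \<ge> - y * cot y)
      else if k > 0 then
        ((2*k-2)*pi < y \<and> y < (2*k-1)*pi \<and> x < - y * cot y) \<or>
        ((2*k-1)*pi \<le> y \<and> y \<le> 2*k*pi) \<or>
        (2*k*pi < y \<and> y < (2*k+1)*pi \<and> x \<ge> - y * cot y)
      else
        ((2*k-1)*pi < y \<and> y < 2*k*pi \<and> x > - y * cot y) \<or>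
        (2*k*pi \<le> y \<and> y \<le> (2*k+1)*pi) \<or>
        ((2*k+1)*pi < y \<and> y < (2*k+2)*pi \<and> x \<le> - y * cot y) \<or>
        (k = -1 \<and> y = 0 \<and> x < -1))}"

definition LambertW :: "int \<Rightarrow> complex \<Rightarrow> complex" where
  "LambertW k z = (THE w. w \<in> LambertW_range k \<and> w * exp w = z)"

definition LambertW_deriv :: "int \<Rightarrow> complex \<Rightarrow> complex" where
  "LambertW_deriv k z = LambertW k z / (z * (1 + LambertW k z))"

end

theory Submission
  imports Defs "HOL-Analysis.Analysis" "HOL-Real_Asymp.Real_Asymp"
begin

lemma sin_shift_int: "sin (u + 2 * pi * real_of_int n) = sin u"
  by (simp add: sin_add cos_integer_2pi sin_integer_2pi)

lemma sin_pos_int: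
  fixes n :: int assumes "2 * real_of_int n*pi < t" "t < (2 * real_of_int n+1)*pi"
  shows "0 < sin t"
proof -
  have "sin t = sin ((t - 2 * real_of_int n*pi) + 2 * pi * of_int n)" by simp
  also have "\<dots> = sin (t - 2 * real_of_int n*pi)" by (rule sin_shift_int)
  finally show ?thesis using assms by (auto intro!: sin_gt_zero simp: algebra_simps)
qed

lemma sin_nonneg_int:
  fixes n :: int assumes "2 * real_of_int n*pi \<le> t" "t \<le> (2 * real_of_int n+1)*pi"
  shows "0 \<le> sin t"
proof -
  have "sin t = sin ((t - 2 * real_of_int n*pi) + 2 * pi * of_int n)" by simp
  also have "\<dots> = sin (t - 2 * real_of_int n*pi)" by (rule sin_shift_int)
  finally show ?thesis using assms by (auto intro!: sin_ge_zero simp: algebra_simps)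
qed

lemma sin_neg_int:
  fixes n :: int assumes "(2 * real_of_int n-1)*pi < t" "t < 2 * real_of_int n*pi"
  shows "sin t < 0"
proof -
  have "0 < sin (t + pi)" by (rule sin_pos_int[of n]) (use assms in \<open>auto simp: algebra_simps\<close>)
  thus ?thesis by simp
qed

lemma sin_nonpos_int:
  fixes n :: int assumes "(2 * real_of_int n-1)*pi \<le> t" "t \<le> 2 * real_of_int n*pi"
  shows "sin t \<le> 0"
proof -
  have "0 \<le> sin (t + pi)" by (rule sin_nonneg_int[of n]) (use assms in \<open>auto simp: algebra_simps\<close>)
  thus ?thesis by simp
qed

lemma cot_cond:
  fixes x y :: real
  assumes "sin y \<noteq> 0"
  shows "x + y * cot y = (x * sin y + y * cos y) / sin y"
  using assms by (simp add: cot_def field_simps)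

lemma polar_sin:
  fixes w :: complex
  assumes "y = Im w"
  shows "Re w * sin y + y * cos y = cmod w * sin (Arg w + y)"
proof -
  have "Re w = cmod w * cos (Arg w)" "Im w = cmod w * sin (Arg w)"
    by (metis Re_rcis Im_rcis rcis_cmod_Arg)+
  thus ?thesis using assms by (simp add: sin_add algebra_simps)
qed

lemma cot_signs:
  fixes w :: complex
  defines "x \<equiv> Re w" and "y \<equiv> Im w" and "th \<equiv> Arg w + Im w"
  assumes "w \<noteq> 0"
  shows "sin y > 0 \<Longrightarrow> (x \<ge> - y * cot y \<longleftrightarrow> sin th \<ge> 0) \<and> (x > - y * cot y \<longleftrightarrow> sin th > 0)
           \<and> (x < - y * cot y \<longleftrightarrow> sin th < 0) \<and> (x \<le> - y * cot y \<longleftrightarrow> sin th \<le> 0)"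
    and "sin y < 0 \<Longrightarrow> (x \<ge> - y * cot y \<longleftrightarrow> sin th \<le> 0) \<and> (x > - y * cot y \<longleftrightarrow> sin th < 0)
           \<and> (x < - y * cot y \<longleftrightarrow> sin th > 0) \<and> (x \<le> - y * cot y \<longleftrightarrow> sin th \<ge> 0)"
proof -
  have c: "cmod w > 0" using assms by simp
  have Q: "x * sin y + y * cos y = cmod w * sin th"
    unfolding x_def th_def y_def by (rule polar_sin) simp
  have e: "x \<ge> - y * cot y \<longleftrightarrow> x + y * cot y \<ge> 0" "x > - y * cot y \<longleftrightarrow> x + y * cot y > 0"
     "x < - y * cot y \<longleftrightarrow> x + y * cot y < 0" "x \<le> - y * cot y \<longleftrightarrow> x + y * cot y \<le> 0" by auto
  show "sin y > 0 \<Longrightarrow> (x \<ge> - y * cot y \<longleftrightarrow> sin th \<ge> 0) \<and> (x > - y * cot y \<longleftrightarrow> sin th > 0)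
           \<and> (x < - y * cot y \<longleftrightarrow> sin th < 0) \<and> (x \<le> - y * cot y \<longleftrightarrow> sin th \<le> 0)"
    unfolding e cot_cond[of y x, OF less_imp_neq[symmetric]] Q using c
    by (simp add: zero_le_divide_iff zero_less_divide_iff divide_less_0_iff divide_le_0_iff
        zero_le_mult_iff zero_less_mult_iff mult_less_0_iff mult_le_0_iff)
  show "sin y < 0 \<Longrightarrow> (x \<ge> - y * cot y \<longleftrightarrow> sin th \<le> 0) \<and> (x > - y * cot y \<longleftrightarrow> sin th < 0)
           \<and> (x < - y * cot y \<longleftrightarrow> sin th > 0) \<and> (x \<le> - y * cot y \<longleftrightarrow> sin th \<ge> 0)"
    unfolding e cot_cond[of y x, OF less_imp_neq] Q using c
    by (auto simp add: zero_le_divide_iff zero_less_divide_iff divide_less_0_iff divide_le_0_iff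
        zero_le_mult_iff zero_less_mult_iff mult_less_0_iff mult_le_0_iff)
qed

lemma range_upper:
  fixes w :: complex and k :: int
  assumes y0: "Im w > 0"
  shows "w \<in> LambertW_range k \<longleftrightarrow>
    (2*real_of_int k-1)*pi < Arg w + Im w \<and> Arg w + Im w \<le> (2*real_of_int k+1)*pi"
proof -
  define x where "x = Re w"
  define y where "y = Im w"
  define a where "a = Arg w"
  define th where "th = Arg w + Im w"
  have w0: "w \<noteq> 0" using y0 by auto
  have a: "0 < a" "a < pi" using y0 Arg_lt_pi a_def by auto
  have th: "th = a + y" using a_def th_def y_def by simp
  have y: "y > 0" using y0 y_def by simp
  note CS = cot_signs(1)[OF w0, folded x_def y_def th_def]
  have mem: "w \<in> LambertW_range k \<longleftrightarrow> (if k = 0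
       then - pi < y \<and> y < 0 \<and> - y * cot y < x \<or>
            y = 0 \<and> - 1 \<le> x \<or> 0 < y \<and> y < pi \<and> - y * cot y \<le> x
       else if 0 < k
            then (2 * real_of_int k - 2) * pi < y \<and>
                 y < (2 * real_of_int k - 1) * pi \<and> x < - y * cot y \<or>
                 (2 * real_of_int k - 1) * pi \<le> y \<and>
                 y \<le> 2 * real_of_int k * pi \<or>
                 2 * real_of_int k * pi < y \<and>
                 y < (2 * real_of_int k + 1) * pi \<and> - y * cot y \<le> x
            else (2 * real_of_int k - 1) * pi < y \<and>
                 y < 2 * real_of_int k * pi \<and> - y * cot y < x \<or>
                 2 * real_of_int k * pi \<le> y \<and>
                 y \<le> (2 * real_of_int k + 1) * pi \<or>
                 (2 * real_of_int k + 1) * pi < y \<and>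
                 y < (2 * real_of_int k + 2) * pi \<and> x \<le> - y * cot y \<or>
                 k = - 1 \<and> y = 0 \<and> x < - 1)"
    by (simp add: LambertW_range_def Let_def x_def y_def)
  show ?thesis
  proof (cases "k = 0")
    case True
    have "sin y > 0" if "y < pi" using sin_gt_zero y that by auto
    moreover have "sin th < 0" if "pi < th" "th < 2*pi" using sin_neg_int[of 1 th] that by simp
    moreover have "sin th \<ge> 0" if "0 \<le> th" "th \<le> pi" using sin_nonneg_int[of 0 th] that by simp
    moreover have "w \<in> LambertW_range k \<longleftrightarrow> y < pi \<and> - y * cot y \<le> x"
      using mem True y by auto
    ultimately have "w \<in> LambertW_range k \<longleftrightarrow> th \<le> pi" using CS y a th
      by (smt (verit))
    thus ?thesis using True th a y by (simp add: th_def)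
  next
    case False
    show ?thesis
    proof (cases "k > 0")
      case kp: True
      have "k \<ge> 1" using kp by simp
      hence k1: "real_of_int k \<ge> 1" by simp
      have s1: "sin y > 0" if "(2 * real_of_int k - 2) * pi < y" "y < (2 * real_of_int k - 1) * pi"
        using sin_pos_int[of "k-1" y] that by (simp add: algebra_simps)
      have s2: "sin y > 0" if "2 * real_of_int k * pi < y" "y < (2 * real_of_int k + 1) * pi"
        using sin_pos_int[of "k" y] that by (simp add: algebra_simps)
      have g1: "sin th \<ge> 0" if "(2 * real_of_int k - 2) * pi \<le> th" "th \<le> (2 * real_of_int k - 1) * pi"
        using sin_nonneg_int[of "k-1" th] that by (simp add: algebra_simps)
      have g2: "sin th < 0" if "(2 * real_of_int k - 1) * pi < th" "th < 2 * real_of_int k * pi"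
        using sin_neg_int[of "k" th] that by (simp add: algebra_simps)
      have g3: "sin th \<ge> 0" if "2 * real_of_int k * pi \<le> th" "th \<le> (2 * real_of_int k + 1) * pi"
        using sin_nonneg_int[of "k" th] that by (simp add: algebra_simps)
      have g4: "sin th < 0" if "(2 * real_of_int k + 1) * pi < th" "th < (2 * real_of_int k + 2) * pi"
        using sin_neg_int[of "k+1" th] that by (simp add: algebra_simps)
      have mem': "w \<in> LambertW_range k \<longleftrightarrow>
                 (2 * real_of_int k - 2) * pi < y \<and>
                 y < (2 * real_of_int k - 1) * pi \<and> x < - y * cot y \<or>
                 (2 * real_of_int k - 1) * pi \<le> y \<and>
                 y \<le> 2 * real_of_int k * pi \<or>
                 2 * real_of_int k * pi < y \<and>
                 y < (2 * real_of_int k + 1) * pi \<and> - y * cot y \<le> x"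
        using mem kp by simp
      show ?thesis unfolding mem' th_def[symmetric]
      proof
        assume "(2 * real_of_int k - 2) * pi < y \<and>
                 y < (2 * real_of_int k - 1) * pi \<and> x < - y * cot y \<or>
                 (2 * real_of_int k - 1) * pi \<le> y \<and>
                 y \<le> 2 * real_of_int k * pi \<or>
                 2 * real_of_int k * pi < y \<and>
                 y < (2 * real_of_int k + 1) * pi \<and> - y * cot y \<le> x"
        then consider "(2 * real_of_int k - 2) * pi < y" "y < (2 * real_of_int k - 1) * pi" "x < - y * cot y"
          | "(2 * real_of_int k - 1) * pi \<le> y" "y \<le> 2 * real_of_int k * pi"
          | "2 * real_of_int k * pi < y" "y < (2 * real_of_int k + 1) * pi" "- y * cot y \<le> x" by blast
        thus "(2 * real_of_int k - 1) * pi < th \<and> th \<le> (2 * real_of_int k + 1) * pi"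
        proof cases
          case 1
          then have "sin th < 0" using s1 CS by auto
          have "th > (2 * real_of_int k - 1) * pi"
          proof (rule ccontr)
            assume "\<not> ?thesis"
            hence "sin th \<ge> 0" using g1 1 th a by (auto simp: algebra_simps)
            thus False using \<open>sin th < 0\<close> by simp
          qed
          thus ?thesis using 1 th a by (auto simp: algebra_simps)
        next
          case 2 thus ?thesis using th a by (auto simp: algebra_simps)
        next
          case 3
          then have "sin th \<ge> 0" using s2 CS by auto
          have "th \<le> (2 * real_of_int k + 1) * pi"
          proof (rule ccontr)
            assume "\<not> ?thesis"
            hence "sin th < 0" using g4 3 th a by (auto simp: algebra_simps)
            thus False using \<open>sin th \<ge> 0\<close> by simp
          qed
          thus ?thesis using 3 th a by (auto simp: algebra_simps)
        qed
      next
        assume A: "(2 * real_of_int k - 1) * pi < th \<and> th \<le> (2 * real_of_int k + 1) * pi"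
        show "(2 * real_of_int k - 2) * pi < y \<and>
                 y < (2 * real_of_int k - 1) * pi \<and> x < - y * cot y \<or>
                 (2 * real_of_int k - 1) * pi \<le> y \<and>
                 y \<le> 2 * real_of_int k * pi \<or>
                 2 * real_of_int k * pi < y \<and>
                 y < (2 * real_of_int k + 1) * pi \<and> - y * cot y \<le> x"
        proof (cases "y < (2 * real_of_int k - 1) * pi")
          case True
          have "(2 * real_of_int k - 2) * pi < y" using A th a by (auto simp: algebra_simps)
          moreover have "sin th < 0" using g2 A th a True by (auto simp: algebra_simps)
          ultimately show ?thesis using True s1 CS by auto
        next
          case F: False
          show ?thesis
          proof (cases "y \<le> 2 * real_of_int k * pi")
            case True thus ?thesis using F by auto
          next
            case False
            have "y < (2 * real_of_int k + 1) * pi" using A th a by (auto simp: algebra_simps)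
            moreover have "sin th \<ge> 0" using g3 A th a False by (auto simp: algebra_simps)
            ultimately show ?thesis using False s2 CS by auto
          qed
        qed
      qed
    next
      case kn: False
      hence "k \<le> -1" using \<open>k \<noteq> 0\<close> by simp
      hence "real_of_int k \<le> -1" by simp
      hence "(2 * real_of_int k + 1) * pi \<le> (-1) * pi" "(2 * real_of_int k + 2) * pi \<le> 0 * pi"
        "(2 * real_of_int k) * pi \<le> 0 * pi"
        by (intro mult_right_mono; simp)+
      hence "(2 * real_of_int k + 1) * pi \<le> - pi" "(2 * real_of_int k + 2) * pi \<le> 0" 
        "2 * real_of_int k * pi \<le> 0" by simp_all
      thus ?thesis unfolding mem using kn \<open>k \<noteq> 0\<close> y a th th_def by (auto simp: algebra_simps)
    qed
  qed
qed

lemma range_lower: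
  fixes w :: complex and k :: int
  assumes y0: "Im w < 0"
  shows "w \<in> LambertW_range k \<longleftrightarrow>
    (2*real_of_int k-1)*pi < Arg w + Im w \<and> Arg w + Im w \<le> (2*real_of_int k+1)*pi"
proof -
  define x where "x = Re w"
  define y where "y = Im w"
  define a where "a = Arg w"
  define th where "th = Arg w + Im w"
  have w0: "w \<noteq> 0" using y0 by auto
  have a: "-pi < a" "a < 0" using y0 Arg_neg_iff[of w] Arg_bounded[of w] a_def by auto
  have th: "th = a + y" using a_def th_def y_def by simp
  have y: "y < 0" using y0 y_def by simp
  note CS = cot_signs(2)[OF w0, folded x_def y_def th_def]
  have mem: "w \<in> LambertW_range k \<longleftrightarrow> (if k = 0
       then - pi < y \<and> y < 0 \<and> - y * cot y < x \<or>
            y = 0 \<and> - 1 \<le> x \<or> 0 < y \<and> y < pi \<and> - y * cot y \<le> x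
       else if 0 < k
            then (2 * real_of_int k - 2) * pi < y \<and>
                 y < (2 * real_of_int k - 1) * pi \<and> x < - y * cot y \<or>
                 (2 * real_of_int k - 1) * pi \<le> y \<and>
                 y \<le> 2 * real_of_int k * pi \<or>
                 2 * real_of_int k * pi < y \<and>
                 y < (2 * real_of_int k + 1) * pi \<and> - y * cot y \<le> x
            else (2 * real_of_int k - 1) * pi < y \<and>
                 y < 2 * real_of_int k * pi \<and> - y * cot y < x \<or>
                 2 * real_of_int k * pi \<le> y \<and>
                 y \<le> (2 * real_of_int k + 1) * pi \<or>
                 (2 * real_of_int k + 1) * pi < y \<and>
                 y < (2 * real_of_int k + 2) * pi \<and> x \<le> - y * cot y \<or>
                 k = - 1 \<and> y = 0 \<and> x < - 1)"
    by (simp add: LambertW_range_def Let_def x_def y_def)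
  show ?thesis
  proof (cases "k = 0")
    case True
    have "sin y < 0" if "-pi < y" using sin_neg_int[of 0 y] y that by auto
    moreover have "sin th < 0" if "-pi < th" "th < 0" using sin_neg_int[of 0 th] that by simp
    moreover have "sin th \<ge> 0" if "-2*pi \<le> th" "th \<le> -pi" using sin_nonneg_int[of "-1" th] that by simp
    moreover have "w \<in> LambertW_range k \<longleftrightarrow> -pi < y \<and> - y * cot y < x"
      using mem True y by auto
    ultimately have "w \<in> LambertW_range k \<longleftrightarrow> -pi < th" using CS y a th
      by (smt (verit))
    thus ?thesis using True th a y by (simp add: th_def)
  next
    case False
    show ?thesis
    proof (cases "k < 0")
      case kp: True
      have s1: "sin y < 0" if "(2 * real_of_int k - 1) * pi < y" "y < 2 * real_of_int k * pi"
        using sin_neg_int[of "k" y] that by (simp add: algebra_simps)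
      have s2: "sin y < 0" if "(2 * real_of_int k + 1) * pi < y" "y < (2 * real_of_int k + 2) * pi"
        using sin_neg_int[of "k+1" y] that by (simp add: algebra_simps)
      have g1: "sin th \<ge> 0" if "(2 * real_of_int k - 2) * pi \<le> th" "th \<le> (2 * real_of_int k - 1) * pi"
        using sin_nonneg_int[of "k-1" th] that by (simp add: algebra_simps)
      have g2: "sin th < 0" if "(2 * real_of_int k - 1) * pi < th" "th < 2 * real_of_int k * pi"
        using sin_neg_int[of "k" th] that by (simp add: algebra_simps)
      have g3: "sin th \<ge> 0" if "2 * real_of_int k * pi \<le> th" "th \<le> (2 * real_of_int k + 1) * pi"
        using sin_nonneg_int[of "k" th] that by (simp add: algebra_simps)
      have g4: "sin th < 0" if "(2 * real_of_int k + 1) * pi < th" "th < (2 * real_of_int k + 2) * pi"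
        using sin_neg_int[of "k+1" th] that by (simp add: algebra_simps)
      have mem': "w \<in> LambertW_range k \<longleftrightarrow>
                 (2 * real_of_int k - 1) * pi < y \<and>
                 y < 2 * real_of_int k * pi \<and> - y * cot y < x \<or>
                 2 * real_of_int k * pi \<le> y \<and>
                 y \<le> (2 * real_of_int k + 1) * pi \<or>
                 (2 * real_of_int k + 1) * pi < y \<and>
                 y < (2 * real_of_int k + 2) * pi \<and> x \<le> - y * cot y"
        using mem kp y by auto
      show ?thesis unfolding mem' th_def[symmetric]
      proof
        assume "(2 * real_of_int k - 1) * pi < y \<and>
                 y < 2 * real_of_int k * pi \<and> - y * cot y < x \<or>
                 2 * real_of_int k * pi \<le> y \<and>
                 y \<le> (2 * real_of_int k + 1) * pi \<or>
                 (2 * real_of_int k + 1) * pi < y \<and>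
                 y < (2 * real_of_int k + 2) * pi \<and> x \<le> - y * cot y"
        then consider "(2 * real_of_int k - 1) * pi < y" "y < 2 * real_of_int k * pi" "- y * cot y < x"
          | "2 * real_of_int k * pi \<le> y" "y \<le> (2 * real_of_int k + 1) * pi"
          | "(2 * real_of_int k + 1) * pi < y" "y < (2 * real_of_int k + 2) * pi" "x \<le> - y * cot y" by blast
        thus "(2 * real_of_int k - 1) * pi < th \<and> th \<le> (2 * real_of_int k + 1) * pi"
        proof cases
          case 1
          then have "sin th < 0" using s1 CS by auto
          have "th > (2 * real_of_int k - 1) * pi"
          proof (rule ccontr)
            assume "\<not> ?thesis"
            hence "sin th \<ge> 0" using g1 1 th a by (auto simp: algebra_simps)
            thus False using \<open>sin th < 0\<close> by simp
          qed
          thus ?thesis using 1 th a by (auto simp: algebra_simps)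
        next
          case 2 thus ?thesis using th a by (auto simp: algebra_simps)
        next
          case 3
          then have "sin th \<ge> 0" using s2 CS by auto
          have "th \<le> (2 * real_of_int k + 1) * pi"
          proof (rule ccontr)
            assume "\<not> ?thesis"
            hence "sin th < 0" using g4 3 th a by (auto simp: algebra_simps)
            thus False using \<open>sin th \<ge> 0\<close> by simp
          qed
          thus ?thesis using 3 th a by (auto simp: algebra_simps)
        qed
      next
        assume A: "(2 * real_of_int k - 1) * pi < th \<and> th \<le> (2 * real_of_int k + 1) * pi"
        show "(2 * real_of_int k - 1) * pi < y \<and>
                 y < 2 * real_of_int k * pi \<and> - y * cot y < x \<or>
                 2 * real_of_int k * pi \<le> y \<and>
                 y \<le> (2 * real_of_int k + 1) * pi \<or>
                 (2 * real_of_int k + 1) * pi < y \<and>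
                 y < (2 * real_of_int k + 2) * pi \<and> x \<le> - y * cot y"
        proof (cases "y < 2 * real_of_int k * pi")
          case True
          have "(2 * real_of_int k - 1) * pi < y" using A th a by (auto simp: algebra_simps)
          moreover have "sin th < 0" using g2 A th a True by (auto simp: algebra_simps)
          ultimately show ?thesis using True s1 CS by auto
        next
          case F: False
          show ?thesis
          proof (cases "y \<le> (2 * real_of_int k + 1) * pi")
            case True thus ?thesis using F by auto
          next
            case False
            have "y < (2 * real_of_int k + 2) * pi" using A th a by (auto simp: algebra_simps)
            moreover have "sin th \<ge> 0" using g3 A th a False by (auto simp: algebra_simps)
            ultimately show ?thesis using False s2 CS by auto
          qed
        qed
      qed
    next
      case kn: False
      hence "k \<ge> 1" using \<open>k \<noteq> 0\<close> by simp
      hence "real_of_int k \<ge> 1" by simp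
      hence "(2 * real_of_int k - 1) * pi \<ge> 1 * pi" "(2 * real_of_int k - 2) * pi \<ge> 0 * pi"
         "(2 * real_of_int k) * pi \<ge> 0 * pi"
        by (intro mult_right_mono; simp)+
      hence F: "(2 * real_of_int k - 1) * pi \<ge> pi" "(2 * real_of_int k - 2) * pi \<ge> 0"
        "2 * real_of_int k * pi \<ge> 0" by simp_all
      have kp: "0 < k" using kn \<open>k \<noteq> 0\<close> by simp
      have "w \<in> LambertW_range k \<longleftrightarrow> (2 * real_of_int k - 2) * pi < y \<and>
                 y < (2 * real_of_int k - 1) * pi \<and> x < - y * cot y \<or>
                 (2 * real_of_int k - 1) * pi \<le> y \<and>
                 y \<le> 2 * real_of_int k * pi \<or>
                 2 * real_of_int k * pi < y \<and>
                 y < (2 * real_of_int k + 1) * pi \<and> - y * cot y \<le> x"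
        by (simp only: mem if_not_P[OF \<open>k \<noteq> 0\<close>] if_P[OF kp])
      hence "w \<notin> LambertW_range k" using y F pi_gt_zero by (smt (verit))
      moreover have "\<not> (2 * real_of_int k - 1) * pi < Arg w + Im w"
        using F th_def th a y by linarith
      ultimately show ?thesis by blast
    qed
  qed
qed

lemma range_real:
  fixes w :: complex and k :: int
  assumes "Im w = 0"
  shows "w \<in> LambertW_range k \<longleftrightarrow> (k = 0 \<and> Re w \<ge> -1) \<or> (k = -1 \<and> Re w < -1)"
proof -
  have mem: "w \<in> LambertW_range k \<longleftrightarrow> (if k = 0
       then - 1 \<le> Re w
       else if 0 < k
            then (2 * real_of_int k - 2) * pi < 0 \<and>
                 0 < (2 * real_of_int k - 1) * pi \<and> Re w < 0 \<or>
                 (2 * real_of_int k - 1) * pi \<le> 0 \<and>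
                 0 \<le> 2 * real_of_int k * pi \<or>
                 2 * real_of_int k * pi < 0 \<and>
                 0 < (2 * real_of_int k + 1) * pi \<and> 0 \<le> Re w
            else (2 * real_of_int k - 1) * pi < 0 \<and>
                 0 < 2 * real_of_int k * pi \<and> 0 < Re w \<or>
                 2 * real_of_int k * pi \<le> 0 \<and>
                 0 \<le> (2 * real_of_int k + 1) * pi \<or>
                 (2 * real_of_int k + 1) * pi < 0 \<and>
                 0 < (2 * real_of_int k + 2) * pi \<and> Re w \<le> 0 \<or>
                 k = - 1 \<and> Re w < - 1)"
    using assms by (simp add: LambertW_range_def Let_def)
  consider "k = 0" | "k > 0" | "k = -1" | "k < -1" by linarith
  thus ?thesis
  proof cases
    case 1 thus ?thesis using mem by simp
  next
    case 2
    hence "(2 * real_of_int k - 2) * pi \<ge> 0 * pi" "(2 * real_of_int k - 1) * pi \<ge> 1 * pi"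
      "(2 * real_of_int k) * pi \<ge> 2 * pi"
      by (intro mult_right_mono; simp)+
    thus ?thesis using mem 2 pi_gt_zero by (smt (verit))
  next
    case 3 thus ?thesis using mem pi_gt_zero by simp
  next
    case 4
    hence "(2 * real_of_int k + 2) * pi \<le> 0 * pi" "(2 * real_of_int k + 1) * pi \<le> (-1) * pi"
      "(2 * real_of_int k) * pi \<le> (-2) * pi"
      by (intro mult_right_mono; simp)+
    thus ?thesis using mem 4 pi_gt_zero by (smt (verit))
  qed
qed

lemma range_nonreal:
  assumes "Im w \<noteq> 0"
  shows "w \<in> LambertW_range k \<longleftrightarrow>
    (2*real_of_int k-1)*pi < Arg w + Im w \<and> Arg w + Im w \<le> (2*real_of_int k+1)*pi"
  using assms range_upper range_lower by (cases "Im w > 0") auto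

lemma int_eq_from_pi:
  fixes d :: int
  assumes "real_of_int d * pi < pi" "- pi < real_of_int d * pi"
  shows "d = 0"
proof (rule ccontr)
  assume "d \<noteq> 0"
  hence "d \<ge> 1 \<or> d \<le> -1" by linarith
  thus False
  proof
    assume "d \<ge> 1" hence "real_of_int d * pi \<ge> 1 * pi" by (intro mult_right_mono) auto
    thus False using assms by simp
  next
    assume "d \<le> -1" hence "real_of_int d * pi \<le> (-1) * pi" by (intro mult_right_mono) auto
    thus False using assms by simp
  qed
qed

lemma wexp_Ln: "w \<noteq> 0 \<Longrightarrow> w * exp w = exp (Ln w + w)"
  by (simp add: exp_add)

lemma sol_nonreal:
  fixes w z :: complex and k :: int
  assumes "Im w \<noteq> 0" "z \<noteq> 0"
  shows "(w \<in> LambertW_range k \<and> w * exp w = z) \<longleftrightarrow>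
    (Arg w + Im w = Arg z + 2 * real_of_int k * pi \<and> cmod w * exp (Re w) = cmod z)"
proof -
  have w0: "w \<noteq> 0" using assms by auto
  have AZ: "- pi < Arg z" "Arg z \<le> pi" using Arg_bounded[of z] by auto
  show ?thesis
  proof
    assume A: "w \<in> LambertW_range k \<and> w * exp w = z"
    hence B: "(2*real_of_int k-1)*pi < Arg w + Im w \<and> Arg w + Im w \<le> (2*real_of_int k+1)*pi"
      using range_nonreal assms by blast
    have IL: "Im (Ln w) = Arg w" "Im (Ln z) = Arg z"
      using w0 assms Arg_eq_Im_Ln by metis+
    have "exp (Ln w + w) = exp (Ln z)" using A wexp_Ln[OF w0] exp_Ln[OF assms(2)] by metis
    then obtain n :: int where n: "Ln w + w = Ln z + complex_of_real (real_of_int (2 * n) * pi) * \<i>"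
      unfolding exp_eq by blast
    have im: "Arg w + Im w = Arg z + 2 * real_of_int n * pi"
      using arg_cong[OF n, of Im] IL by simp
    have re: "ln (cmod w) + Re w = ln (cmod z)"
      using arg_cong[OF n, of Re] w0 assms by (simp add: Re_Ln)
    have e1: "real_of_int (n - k) * pi = real_of_int n * pi - real_of_int k * pi"
      "(2*real_of_int k-1)*pi = 2 * (real_of_int k * pi) - pi"
      "(2*real_of_int k+1)*pi = 2 * (real_of_int k * pi) + pi"
      "2 * real_of_int n * pi = 2 * (real_of_int n * pi)"
      by (simp_all add: algebra_simps)
    have "real_of_int (n - k) * pi < pi" "- pi < real_of_int (n - k) * pi"
      using B im AZ unfolding e1 by linarith+
    hence "n = k" using int_eq_from_pi[of "n-k"] by simp
    moreover have "cmod w * exp (Re w) = cmod z"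
    proof -
      have "exp (ln (cmod w) + Re w) = exp (ln (cmod z))" using re by simp
      thus ?thesis using w0 assms by (simp add: exp_add)
    qed
    ultimately show "Arg w + Im w = Arg z + 2 * real_of_int k * pi \<and> cmod w * exp (Re w) = cmod z"
      using im by simp
  next
    assume A: "Arg w + Im w = Arg z + 2 * real_of_int k * pi \<and> cmod w * exp (Re w) = cmod z"
    have e1: "(2*real_of_int k-1)*pi = 2 * real_of_int k * pi - pi"
      "(2*real_of_int k+1)*pi = 2 * real_of_int k * pi + pi"
      by (simp_all add: algebra_simps)
    have "(2*real_of_int k-1)*pi < Arg w + Im w \<and> Arg w + Im w \<le> (2*real_of_int k+1)*pi"
      using A AZ unfolding e1 by linarith
    hence R: "w \<in> LambertW_range k" using range_nonreal assms by blast
    have re: "ln (cmod w) + Re w = ln (cmod z)"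
    proof -
      have "ln (cmod w * exp (Re w)) = ln (cmod z)" using A by simp
      thus ?thesis using w0 by (simp add: ln_mult)
    qed
    have "Ln w + w = Ln z + complex_of_real (real_of_int (2 * k) * pi) * \<i>"
    proof (rule complex_eqI)
      show "Re (Ln w + w) = Re (Ln z + complex_of_real (real_of_int (2 * k) * pi) * \<i>)"
        using re w0 assms by (simp add: Re_Ln)
      have "Im (Ln w) = Arg w" "Im (Ln z) = Arg z" using w0 assms Arg_eq_Im_Ln by metis+
      thus "Im (Ln w + w) = Im (Ln z + complex_of_real (real_of_int (2 * k) * pi) * \<i>)"
        using A by simp
    qed
    hence "exp (Ln w + w) = exp (Ln z)" unfolding exp_eq by blast
    thus "w \<in> LambertW_range k \<and> w * exp w = z" using R wexp_Ln[OF w0] exp_Ln[OF assms(2)] by metis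
  qed
qed

definition Fb :: "real \<Rightarrow> real \<Rightarrow> real" where
  "Fb b a = ln (b - a) - ln (sin a) + (b - a) * cos a / sin a"

lemma Fb_deriv:
  assumes "0 < a" "a < pi" "a < b"
  shows "\<exists>D. (Fb b has_real_derivative D) (at a) \<and> D < 0"
proof -
  have s: "sin a > 0" using assms sin_gt_zero by auto
  define D where "D = - (1 / (b - a)) - cos a / sin a +
        ((- cos a - sin a * (b - a)) * sin a - (b - a) * cos a * cos a) / (sin a * sin a)"
  have "(Fb b has_real_derivative D) (at a)"
    unfolding Fb_def[abs_def] D_def
    using s assms by (auto intro!: derivative_eq_intros)
  moreover have "D < 0"
  proof -
    have key: "D * ((b-a) * (sin a * sin a)) = -(((b-a) + sin a * cos a)^2 + (sin a * sin a)^2)"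
    proof -
      have "D * ((b-a) * (sin a * sin a)) = - (sin a * sin a) - (b-a) * cos a * sin a +
          ((- cos a - sin a * (b - a)) * sin a - (b - a) * cos a * cos a) * (b - a)"
        unfolding D_def using s assms by (simp add: field_simps)
      also have "\<dots> = -(((b-a) + sin a * cos a)^2 + (sin a * sin a)^2)"
        using sin_cos_squared_add3[of a] by algebra
      finally show ?thesis .
    qed
    have "((b-a) + sin a * cos a)^2 + (sin a * sin a)^2 > 0" using s by (simp add: add_nonneg_pos)
    moreover have "(b-a) * (sin a * sin a) > 0" using s assms by simp
    ultimately show ?thesis using key
      by (smt (verit) mult_nonneg_nonneg)
  qed
  ultimately show ?thesis by blast
qed

lemma Fb_strict:
  assumes "0 < a1" "a1 < a2" "a2 < b" "a2 < pi"
  shows "Fb b a2 < Fb b a1"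
  by (rule DERIV_neg_imp_decreasing[OF assms(2)]) (use assms Fb_deriv in auto)

lemma Fb_inj:
  assumes "0 < a1" "a1 < b" "a1 < pi" "0 < a2" "a2 < b" "a2 < pi" "Fb b a1 = Fb b a2"
  shows "a1 = a2"
  using Fb_strict[of a1 a2 b] Fb_strict[of a2 a1 b] assms by (cases a1 a2 rule: linorder_cases) auto

lemma Fb_cont:
  assumes "0 < a" "a < pi" "a < b"
  shows "isCont (Fb b) a"
  using Fb_deriv[OF assms] DERIV_isCont by blast

lemma Fb_lim0:
  assumes "b > 0" shows "filterlim (Fb b) at_top (at_right 0)"
  unfolding Fb_def[abs_def] using assms by real_asymp

lemma Fb_lim_pi:
  assumes "b > pi" shows "filterlim (\<lambda>u. Fb b (pi - u)) at_bot (at_right 0)"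
proof -
  have eq: "(\<lambda>u. Fb b (pi - u)) = (\<lambda>u. ln (b - (pi - u)) - ln (sin u) + (b - (pi - u)) * (- cos u) / sin u)"
    by (simp add: Fb_def)
  show ?thesis unfolding eq using assms by real_asymp
qed

lemma Fb_lim_pi_eq:
  shows "((\<lambda>u. Fb pi (pi - u)) \<longlongrightarrow> -1) (at_right 0)"
proof -
  have eq: "(\<lambda>u. Fb pi (pi - u)) = (\<lambda>u. ln (pi - (pi - u)) - ln (sin u) + (pi - (pi - u)) * (- cos u) / sin u)"
    by (simp add: Fb_def)
  show ?thesis unfolding eq by real_asymp
qed

lemma Fb_lim_b:
  assumes "0 < b" "b < pi" shows "filterlim (\<lambda>u. Fb b (b - u)) at_bot (at_right 0)"
proof -
  have eq: "(\<lambda>u. Fb b (b - u)) = (\<lambda>u. (- ln (sin (b - u)) + u * cos (b - u) / sin (b - u)) + ln u)"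
    by (auto simp: Fb_def algebra_simps)
  have sb: "sin b > 0" using assms sin_gt_zero by auto
  have "((\<lambda>u. - ln (sin (b - u)) + u * cos (b - u) / sin (b - u)) \<longlongrightarrow>
          - ln (sin (b - 0)) + 0 * cos (b - 0) / sin (b - 0)) (at_right 0)"
    using sb by (intro tendsto_intros tendsto_ln) auto
  moreover have "filterlim ln at_bot (at_right (0::real))" by real_asymp
  ultimately show ?thesis unfolding eq by (subst filterlim_tendsto_add_at_bot_iff)
qed



lemma Fb_ivt:
  assumes "0 < a1" "a1 < a2" "a2 < b" "a2 < pi" "Fb b a2 \<le> c" "c \<le> Fb b a1"
  shows "\<exists>a. a1 \<le> a \<and> a \<le> a2 \<and> Fb b a = c"
proof -
  have "\<forall>x. a1 \<le> x \<and> x \<le> a2 \<longrightarrow> isCont (Fb b) x"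
    using assms Fb_cont by auto
  thus ?thesis using IVT2[of "Fb b" a2 c a1] assms by auto
qed

lemma Fb_start:
  assumes "b > 0" "0 < m"
  shows "\<exists>a1. 0 < a1 \<and> a1 < m \<and> Fb b a1 > c"
proof -
  have "eventually (\<lambda>a. c + 1 \<le> Fb b a) (at_right 0)"
    using Fb_lim0[OF assms(1)] unfolding filterlim_at_top by blast
  then obtain e where e: "e > 0" "\<And>y. 0 < y \<Longrightarrow> y < e \<Longrightarrow> c + 1 \<le> Fb b y"
    unfolding eventually_at_right_field by auto
  define a1 where "a1 = min e m / 2"
  have "0 < a1" "a1 < m" "a1 < e" using e assms by (auto simp: a1_def)
  thus ?thesis using e(2)[of a1] by (intro exI[of _ a1]) auto
qed

lemma Fb_exists:
  assumes "b > 0" "b \<noteq> pi"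
  shows "\<exists>a. 0 < a \<and> a < b \<and> a < pi \<and> Fb b a = c"
proof -
  define m where "m = min b pi"
  have m: "m > 0" using assms by (simp add: m_def)
  obtain a1 where a1: "0 < a1" "a1 < m" "Fb b a1 > c" using Fb_start[OF assms(1) m] by blast
  have "\<exists>a2. a1 < a2 \<and> a2 < m \<and> Fb b a2 < c"
  proof (cases "b < pi")
    case True
    have "eventually (\<lambda>u. Fb b (b - u) \<le> c - 1) (at_right 0)"
      using Fb_lim_b[OF assms(1) True] unfolding filterlim_at_bot by blast
    then obtain e where e: "e > 0" "\<And>y. 0 < y \<Longrightarrow> y < e \<Longrightarrow> Fb b (b - y) \<le> c - 1"
      unfolding eventually_at_right_field by auto
    define u where "u = min e (b - a1) / 2"
    have "m = b" using True by (simp add: m_def)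
    have "0 < u" "u < e" "u < b - a1" using e a1 \<open>m = b\<close> by (auto simp: u_def)
    thus ?thesis using e(2)[of u] \<open>m = b\<close> by (intro exI[of _ "b - u"]) auto
  next
    case False
    hence bp: "b > pi" using assms by simp
    have "eventually (\<lambda>u. Fb b (pi - u) \<le> c - 1) (at_right 0)"
      using Fb_lim_pi[OF bp] unfolding filterlim_at_bot by blast
    then obtain e where e: "e > 0" "\<And>y. 0 < y \<Longrightarrow> y < e \<Longrightarrow> Fb b (pi - y) \<le> c - 1"
      unfolding eventually_at_right_field by auto
    define u where "u = min e (pi - a1) / 2"
    have "m = pi" using bp by (simp add: m_def)
    have "0 < u" "u < e" "u < pi - a1" using e a1 \<open>m = pi\<close> by (auto simp: u_def)
    thus ?thesis using e(2)[of u] \<open>m = pi\<close> by (intro exI[of _ "pi - u"]) auto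
  qed
  then obtain a2 where a2: "a1 < a2" "a2 < m" "Fb b a2 < c" by blast
  have "a2 < b" "a2 < pi" using a2 by (auto simp: m_def)
  then obtain a where "a1 \<le> a" "a \<le> a2" "Fb b a = c"
    using Fb_ivt[of a1 a2 b c] a1 a2 by auto
  thus ?thesis using a1 a2 \<open>a2 < b\<close> \<open>a2 < pi\<close> by (intro exI[of _ a]) auto
qed

lemma Fb_exists_pi:
  assumes "c > -1"
  shows "\<exists>a. 0 < a \<and> a < pi \<and> Fb pi a = c"
proof -
  obtain a1 where a1: "0 < a1" "a1 < pi" "Fb pi a1 > c" using Fb_start[of pi pi c] by auto
  have "eventually (\<lambda>u. Fb pi (pi - u) < c) (at_right 0)"
    using order_tendstoD(2)[OF Fb_lim_pi_eq assms] .
  then obtain e where e: "e > 0" "\<And>y. 0 < y \<Longrightarrow> y < e \<Longrightarrow> Fb pi (pi - y) < c"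
    unfolding eventually_at_right_field by auto
  define u where "u = min e (pi - a1) / 2"
  have u: "0 < u" "u < e" "u < pi - a1" using e a1 by (auto simp: u_def)
  have "pi - u < pi" "a1 < pi - u" using u by auto
  then obtain a where "a1 \<le> a" "a \<le> pi - u" "Fb pi a = c"
    using Fb_ivt[of a1 "pi - u" pi c] a1 e(2)[of u] u by auto
  thus ?thesis using a1 u by (intro exI[of _ a]) auto
qed

lemma Fb_pi_gt:
  assumes "0 < a" "a < pi"
  shows "Fb pi a > -1"
proof -
  define a' where "a' = (a + pi) / 2"
  have a': "a < a'" "a' < pi" using assms by (auto simp: a'_def)
  have "Fb pi a' < Fb pi a" using Fb_strict[of a a' pi] a' assms by auto
  moreover have "-1 \<le> Fb pi a'"
  proof (rule tendsto_upperbound[OF Fb_lim_pi_eq])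
    show "eventually (\<lambda>u. Fb pi (pi - u) \<le> Fb pi a') (at_right 0)"
      unfolding eventually_at_right_field
    proof (intro exI[of _ "pi - a'"] conjI allI impI)
      fix y assume "0 < y" "y < pi - a'"
      thus "Fb pi (pi - y) \<le> Fb pi a'" using Fb_strict[of a' "pi - y" pi] a' assms by auto
    qed (use a' in auto)
  qed simp
  ultimately show ?thesis by simp
qed

lemma h_deriv: "((\<lambda>x::real. x * exp x) has_real_derivative (1 + x) * exp x) (at x)"
  by (auto intro!: derivative_eq_intros simp: algebra_simps)

lemma h_cont: "continuous_on S (\<lambda>x::real. x * exp x)"
  by (intro continuous_intros)

lemma h_inc:
  fixes x y :: real
  assumes "-1 \<le> x" "x < y" shows "x * exp x < y * exp y"
proof (rule DERIV_pos_imp_increasing_open[OF assms(2)])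
  fix t assume "x < t" "t < y"
  thus "\<exists>D. ((\<lambda>x. x * exp x) has_real_derivative D) (at t) \<and> 0 < D"
    using h_deriv[of t] assms by (intro exI[of _ "(1 + t) * exp t"]) auto
qed (rule h_cont)

lemma h_dec:
  fixes x y :: real
  assumes "x < y" "y \<le> -1" shows "y * exp y < x * exp x"
proof (rule DERIV_neg_imp_decreasing_open[OF assms(1)])
  fix t assume "x < t" "t < y"
  thus "\<exists>D. ((\<lambda>x. x * exp x) has_real_derivative D) (at t) \<and> D < 0"
    using h_deriv[of t] assms by (intro exI[of _ "(1 + t) * exp t"]) (auto simp: mult_neg_pos)
qed (rule h_cont)

lemma h_m1: "(-1::real) * exp (-1) = - 1 / exp 1"
  by (simp add: exp_minus field_simps)

lemma h_gt:
  fixes x :: real assumes "x \<noteq> -1" shows "x * exp x > - 1 / exp 1"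
proof (cases "x > -1")
  case True thus ?thesis using h_inc[of "-1" x] h_m1 by simp
next
  case False thus ?thesis using h_dec[of x "-1"] h_m1 assms by simp
qed

lemma h_ex_pos:
  fixes c :: real assumes "c > 0" shows "\<exists>x\<ge>0. x * exp x = c"
proof -
  have "c \<le> c * exp c" using assms by simp
  moreover have "\<forall>x. 0 \<le> x \<and> x \<le> c \<longrightarrow> isCont (\<lambda>x::real. x * exp x) x"
    by (auto intro!: continuous_intros)
  ultimately show ?thesis using IVT[of "\<lambda>x::real. x * exp x" 0 c c] assms by auto
qed

lemma h_ex_mid:
  fixes c :: real assumes "- 1 / exp 1 < c" "c < 0" shows "\<exists>x. -1 < x \<and> x < 0 \<and> x * exp x = c"
proof -
  have "\<forall>x. -1 \<le> x \<and> x \<le> 0 \<longrightarrow> isCont (\<lambda>x::real. x * exp x) x"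
    by (auto intro!: continuous_intros)
  then obtain x where "-1 \<le> x" "x \<le> 0" "x * exp x = c"
    using IVT[of "\<lambda>x::real. x * exp x" "-1" c 0] assms h_m1 by force
  moreover have "x \<noteq> -1" "x \<noteq> 0" using assms h_m1 \<open>x * exp x = c\<close> by auto
  ultimately show ?thesis by (intro exI[of _ x]) auto
qed

lemma h_lim: "((\<lambda>w::real. w * exp w) \<longlongrightarrow> 0) at_bot"
  by real_asymp

lemma h_ex_left:
  fixes c :: real assumes "- 1 / exp 1 < c" "c < 0" shows "\<exists>x. x < -1 \<and> x * exp x = c"
proof -
  have "eventually (\<lambda>x. c < x * exp x) at_bot"
    using order_tendstoD(1)[OF h_lim assms(2)] .
  then obtain N where N: "\<And>x. x \<le> N \<Longrightarrow> c < x * exp x"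
    unfolding eventually_at_bot_linorder by auto
  define x0 where "x0 = min N (-2)"
  have x0: "x0 < -1" "c < x0 * exp x0" using N[of x0] by (auto simp: x0_def)
  have "\<forall>x. x0 \<le> x \<and> x \<le> -1 \<longrightarrow> isCont (\<lambda>x::real. x * exp x) x"
    by (auto intro!: continuous_intros)
  then obtain x where "x0 \<le> x" "x \<le> -1" "x * exp x = c"
    using IVT2[of "\<lambda>x::real. x * exp x" "-1" c x0] assms h_m1 x0 by force
  moreover have "x \<noteq> -1" using assms h_m1 \<open>x * exp x = c\<close> by auto
  ultimately show ?thesis by (intro exI[of _ x]) auto
qed

lemma polar_nonreal:
  assumes "Im w \<noteq> 0"
  shows "sin (Arg w) \<noteq> 0" "cmod w = Im w / sin (Arg w)" "Re w = Im w * cos (Arg w) / sin (Arg w)"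
proof -
  have e: "Re w = cmod w * cos (Arg w)" "Im w = cmod w * sin (Arg w)"
    by (metis Re_rcis Im_rcis rcis_cmod_Arg)+
  from e(2) assms show 1: "sin (Arg w) \<noteq> 0" by auto
  show 2: "cmod w = Im w / sin (Arg w)" using e(2) 1 by simp
  show "Re w = Im w * cos (Arg w) / sin (Arg w)" using e(1) 2 by simp
qed

lemma arg_upper: "Im w > 0 \<Longrightarrow> 0 < Arg w \<and> Arg w < pi"
  using Arg_lt_pi by blast

lemma arg_lower: "Im w < 0 \<Longrightarrow> - pi < Arg w \<and> Arg w < 0"
  using Arg_neg_iff Arg_bounded by blast

lemma modulus_Fb:
  assumes "Im w \<noteq> 0"
  shows "ln (cmod w * exp (Re w)) = Fb \<bar>Arg w + Im w\<bar> \<bar>Arg w\<bar>"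
proof -
  note P = polar_nonreal[OF assms]
  have w0: "w \<noteq> 0" using assms by auto
  have "ln (cmod w * exp (Re w)) = ln (cmod w) + Re w" using w0 by (simp add: ln_mult)
  also have "\<dots> = ln (Im w / sin (Arg w)) + Im w * cos (Arg w) / sin (Arg w)"
    using P by simp
  also have "\<dots> = Fb \<bar>Arg w + Im w\<bar> \<bar>Arg w\<bar>"
  proof (cases "Im w > 0")
    case True
    with arg_upper have a: "0 < Arg w" "Arg w < pi" by auto
    have s: "sin (Arg w) > 0" using a sin_gt_zero by auto
    have "\<bar>Arg w + Im w\<bar> = Arg w + Im w" "\<bar>Arg w\<bar> = Arg w" using a True by auto
    thus ?thesis using True s by (simp add: Fb_def ln_div)
  next
    case False
    hence y: "Im w < 0" using assms by simp
    with arg_lower have a: "- pi < Arg w" "Arg w < 0" by auto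
    have s: "sin (- Arg w) > 0" using a by (intro sin_gt_zero) auto
    have e: "\<bar>Arg w + Im w\<bar> = - Arg w - Im w" "\<bar>Arg w\<bar> = - Arg w" using a y by auto
    have q: "Im w / sin (Arg w) = (- Im w) / sin (- Arg w)" by simp
    have L: "ln (Im w / sin (Arg w)) = ln (- Im w) - ln (sin (- Arg w))"
      unfolding q using s y by (simp only: ln_div) simp
    have R: "Im w * cos (Arg w) / sin (Arg w) = (- Im w) * cos (- Arg w) / sin (- Arg w)"
      by simp
    have d: "(- Arg w - Im w) - (- Arg w) = - Im w" by simp
    show ?thesis unfolding e Fb_def L R d ..
  qed
  finally show ?thesis .
qed

lemma nonreal_char:
  fixes w z :: complex and k :: int
  assumes "Im w \<noteq> 0" "z \<noteq> 0"
  shows "(w \<in> LambertW_range k \<and> w * exp w = z) \<longleftrightarrow>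
    (Arg w + Im w = Arg z + 2 * real_of_int k * pi \<and>
     Fb \<bar>Arg z + 2 * real_of_int k * pi\<bar> \<bar>Arg w\<bar> = ln (cmod z))"
proof -
  have w0: "w \<noteq> 0" using assms by auto
  have pos: "cmod w * exp (Re w) > 0" "cmod z > 0" using assms w0 by auto
  have "cmod w * exp (Re w) = cmod z \<longleftrightarrow> ln (cmod w * exp (Re w)) = ln (cmod z)"
    using pos by simp
  thus ?thesis unfolding sol_nonreal[OF assms] using modulus_Fb[OF assms(1)] by metis
qed

lemma nonreal_props:
  fixes w z :: complex and k :: int
  defines "b \<equiv> Arg z + 2 * real_of_int k * pi"
  assumes "Im w \<noteq> 0" "z \<noteq> 0" "w \<in> LambertW_range k" "w * exp w = z"
  shows "Arg w + Im w = b" "Fb \<bar>b\<bar> \<bar>Arg w\<bar> = ln (cmod z)" "0 < \<bar>Arg w\<bar>" "\<bar>Arg w\<bar> < \<bar>b\<bar>"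
    "\<bar>Arg w\<bar> < pi" "Im w > 0 \<Longrightarrow> b > 0" "Im w < 0 \<Longrightarrow> b < 0"
proof -
  have C: "Arg w + Im w = b \<and> Fb \<bar>b\<bar> \<bar>Arg w\<bar> = ln (cmod z)"
    using nonreal_char[OF assms(2,3), of k] assms(4,5) unfolding b_def by blast
  thus "Arg w + Im w = b" "Fb \<bar>b\<bar> \<bar>Arg w\<bar> = ln (cmod z)" by auto
  have "0 < \<bar>Arg w\<bar> \<and> \<bar>Arg w\<bar> < \<bar>b\<bar> \<and> \<bar>Arg w\<bar> < pi"
  proof (cases "Im w > 0")
    case True thus ?thesis using arg_upper[OF True] C by auto
  next
    case False
    hence "Im w < 0" using assms by simp
    thus ?thesis using arg_lower[of w] C by auto
  qed
  thus "0 < \<bar>Arg w\<bar>" "\<bar>Arg w\<bar> < \<bar>b\<bar>" "\<bar>Arg w\<bar> < pi" by auto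
  show "Im w > 0 \<Longrightarrow> b > 0" using arg_upper[of w] C by auto
  show "Im w < 0 \<Longrightarrow> b < 0" using arg_lower[of w] C by auto
qed

lemma nonreal_unique:
  fixes w1 w2 z :: complex and k :: int
  assumes "Im w1 \<noteq> 0" "Im w2 \<noteq> 0" "z \<noteq> 0"
    "w1 \<in> LambertW_range k" "w1 * exp w1 = z" "w2 \<in> LambertW_range k" "w2 * exp w2 = z"
  shows "w1 = w2"
proof -
  define b where "b = Arg z + 2 * real_of_int k * pi"
  note P1 = nonreal_props[OF assms(1,3,4,5), folded b_def]
  note P2 = nonreal_props[OF assms(2,3,6,7), folded b_def]
  have sgn: "(Im w1 > 0 \<and> Im w2 > 0) \<or> (Im w1 < 0 \<and> Im w2 < 0)"
    using P1(6,7) P2(6,7) assms(1,2) by (metis linorder_neqE_linordered_idom not_less_iff_gr_or_eq)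
  have "\<bar>Arg w1\<bar> = \<bar>Arg w2\<bar>"
    using Fb_inj[of "\<bar>Arg w1\<bar>" "\<bar>b\<bar>" "\<bar>Arg w2\<bar>"] P1 P2 by auto
  moreover have "(Arg w1 > 0 \<and> Arg w2 > 0) \<or> (Arg w1 < 0 \<and> Arg w2 < 0)"
    using sgn arg_upper[of w1] arg_upper[of w2] arg_lower[of w1] arg_lower[of w2] by auto
  ultimately have A: "Arg w1 = Arg w2" by auto
  hence I: "Im w1 = Im w2" using P1(1) P2(1) by simp
  have "Re w1 = Re w2" using polar_nonreal(3)[OF assms(1)] polar_nonreal(3)[OF assms(2)] A I by simp
  thus ?thesis using I by (simp add: complex_eq_iff)
qed

lemma nonreal_exist:
  fixes z :: complex and k :: int and a :: real
  defines "b \<equiv> Arg z + 2 * real_of_int k * pi"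
  assumes "z \<noteq> 0" "b \<noteq> 0" "0 < a" "a < \<bar>b\<bar>" "a < pi" "Fb \<bar>b\<bar> a = ln (cmod z)"
  shows "\<exists>w. Im w \<noteq> 0 \<and> w \<in> LambertW_range k \<and> w * exp w = z"
proof -
  define al where "al = (if b > 0 then a else - a)"
  define r where "r = (b - al) / sin al"
  have al: "-pi < al" "al \<le> pi" "\<bar>al\<bar> = a" using assms by (auto simp: al_def)
  have sa: "sin al \<noteq> 0 \<and> r > 0 \<and> b - al \<noteq> 0"
  proof (cases "b > 0")
    case True
    hence "al = a" "sin a > 0" using assms sin_gt_zero by (auto simp: al_def)
    thus ?thesis using True assms by (auto simp: r_def)
  next
    case False
    hence "al = - a" "sin a > 0" "b < 0" using assms sin_gt_zero by (auto simp: al_def)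
    hence ba: "b + a < 0" using assms(5) by simp
    have "r = (-(b + a)) / sin a" using \<open>al = - a\<close> by (simp add: r_def minus_divide_left)
    moreover have "(-(b + a)) / sin a > 0" using ba \<open>sin a > 0\<close> by simp
    ultimately show ?thesis using \<open>al = - a\<close> \<open>sin a > 0\<close> ba by auto
  qed
  define w where "w = rcis r al"
  have Aw: "Arg w = al" unfolding w_def using Arg_rcis[of al r] al sa by auto
  have Iw: "Im w = b - al" unfolding w_def using sa by (simp add: r_def)
  have "Im w \<noteq> 0" using Iw sa by simp
  moreover have "Arg w + Im w = b" using Aw Iw by simp
  moreover have "Fb \<bar>b\<bar> \<bar>Arg w\<bar> = ln (cmod z)" using Aw al assms by simp
  ultimately have "w \<in> LambertW_range k \<and> w * exp w = z"
    using nonreal_char[of w z k] assms(2) unfolding b_def by auto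
  thus ?thesis using \<open>Im w \<noteq> 0\<close> by blast
qed

lemma real_char:
  fixes w z :: complex and k :: int
  assumes "Im w = 0"
  shows "(w \<in> LambertW_range k \<and> w * exp w = z) \<longleftrightarrow>
    ((k = 0 \<and> Re w \<ge> -1) \<or> (k = -1 \<and> Re w < -1)) \<and> z = of_real (Re w * exp (Re w))"
proof -
  have w: "w = of_real (Re w)" using assms by (simp add: complex_eq_iff)
  have "exp w = of_real (exp (Re w))" using w exp_of_real by metis
  hence "w * exp w = of_real (Re w * exp (Re w))" using w by (metis of_real_mult)
  thus ?thesis using range_real[OF assms, of k] by auto
qed

lemma h_inj_ge: "(x::real) \<ge> -1 \<Longrightarrow> y \<ge> -1 \<Longrightarrow> x * exp x = y * exp y \<Longrightarrow> x = y"
  using h_inc[of x y] h_inc[of y x] by (cases x y rule: linorder_cases) auto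

lemma h_inj_lt: "(x::real) < -1 \<Longrightarrow> y < -1 \<Longrightarrow> x * exp x = y * exp y \<Longrightarrow> x = y"
  using h_dec[of x y] h_dec[of y x] by (cases x y rule: linorder_cases) auto

lemma h_ge: "(x::real) * exp x \<ge> - 1 / exp 1"
  using h_gt[of x] h_m1 by (cases "x = -1") auto

lemma norm_exp_rem3:
  fixes z :: complex
  assumes "norm z \<le> 1 / 2"
  shows "norm (exp z - 1 - z - z^2/2) \<le> norm z ^ 3 / 3"
proof (cases "z = 0")
  case False
  have sums: "(\<lambda>k. z ^ (k + 3) /\<^sub>R fact (k + 3)) sums (exp z - (\<Sum>k<3. z ^ k /\<^sub>R fact k))"
    by (intro sums_split_initial_segment exp_converges)
  have "summable (\<lambda>k. norm z ^ (k + 3) /\<^sub>R fact (k + 3))"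
    using summable_norm_exp[of z]
    by (intro summable_norm summable_ignore_initial_segment)
       (auto simp: norm_power norm_divide divide_simps)
  also have "?this \<longleftrightarrow> summable (\<lambda>k. norm z ^ 3 * (norm z ^ k / fact (k + 3)))"
    by (simp add: power_add mult_ac divide_simps del: of_nat_Suc of_nat_add)
  also have "\<dots> \<longleftrightarrow> summable (\<lambda>k. norm z ^ k / fact (k + 3))"
    by (subst summable_cmult_iff) (use \<open>z \<noteq> 0\<close> in auto)
  finally have summable: "summable (\<lambda>k. norm z ^ k / fact (k + 3))" .
  have eq3: "(\<Sum>k<3. z ^ k /\<^sub>R fact k) = 1 + z + z^2/2"
    by (simp add: eval_nat_numeral scaleR_conv_of_real)
  have "exp z - 1 - z - z^2/2 = (\<Sum>k. z ^ (k + 3) / fact (k + 3))"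
    using sums unfolding eq3 by (simp add: sums_iff scaleR_conv_of_real divide_simps algebra_simps)
  also have "norm \<dots> \<le> (\<Sum>k. norm (z ^ (k + 3) / fact (k + 3)))"
    using summable_norm_exp[of z]
    by (intro summable_norm summable_ignore_initial_segment)
       (auto simp: norm_power norm_divide divide_simps)
  also have "\<dots> = (\<Sum>k. norm z ^ 3 * (norm z ^ k / fact (k + 3)))"
    by (simp add: power_add norm_power norm_divide mult_ac norm_mult del: of_nat_Suc)
  also have "\<dots> = norm z ^ 3 * (\<Sum>k. norm z ^ k / fact (k + 3))"
    using summable by (rule suminf_mult)
  also have "\<dots> \<le> norm z ^ 3 * (1 / (1 - norm z) / 6)"
  proof (intro mult_left_mono, rule sums_le)
    show "(\<lambda>k. norm z ^ k / fact (k + 3)) sums (\<Sum>k. norm z ^ k / fact (k + 3))"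
      using summable by blast
    show "(\<lambda>k. norm z ^ k / 6) sums (1 / (1 - norm z) / 6)"
      using assms by (intro geometric_sums sums_divide) auto
  next
    fix k :: nat
    have "norm z ^ k / fact (k + 3) \<le> norm z ^ k / fact 3"
      by (intro divide_left_mono fact_mono) auto
    thus "norm z ^ k / fact (k + 3) \<le> norm z ^ k / 6"
      by (simp add: eval_nat_numeral)
  qed (auto simp: divide_simps)
  also have "\<dots> \<le> norm z ^ 3 * (1 / (1 - 1/2) / 6)"
    using assms by (intro mult_left_mono divide_right_mono divide_left_mono) auto
  also have "\<dots> = norm z ^ 3 / 3" by simp
  finally show ?thesis .
qed auto

lemma f_bound:
  fixes t :: complex
  assumes "norm t \<le> 1 / 2"
  shows "norm (1 + (t - 1) * exp t) \<le> norm t ^ 2"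
proof -
  define R where "R = exp t - 1 - t - t^2/2"
  have R: "norm R \<le> norm t ^ 3 / 3" using norm_exp_rem3[OF assms] by (simp add: R_def)
  have eq: "1 + (t - 1) * exp t = t^2/2 + t^3/2 + (t - 1) * R"
    by (simp add: R_def field_simps power2_eq_square power3_eq_cube)
  define r where "r = norm t"
  have r: "0 \<le> r" "r \<le> 1/2" using assms by (auto simp: r_def)
  have "norm (1 + (t - 1) * exp t) \<le> norm (t^2/2) + norm (t^3/2) + norm ((t - 1) * R)"
    unfolding eq by (rule order_trans[OF norm_triangle_ineq add_right_mono[OF norm_triangle_ineq]])
  also have "\<dots> \<le> r^2/2 + r^3/2 + (1 + r) * (r^3/3)"
  proof -
    have "norm (t - 1) \<le> 1 + r" using norm_triangle_ineq4[of t 1] by (simp add: r_def)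
    hence "norm ((t - 1) * R) \<le> (1 + r) * (r^3/3)"
      unfolding norm_mult using R r by (intro mult_mono) (auto simp: r_def)
    thus ?thesis by (simp add: norm_power r_def norm_divide)
  qed
  also have "\<dots> \<le> r^2"
  proof -
    have "r^2/2 + r^3/2 + (1 + r) * (r^3/3) = r^2 * (1/2 + r/2 + (1 + r) * r / 3)"
      by (simp add: algebra_simps power2_eq_square power3_eq_cube)
    also have "\<dots> \<le> r^2 * 1"
    proof (rule mult_left_mono)
      have "(1 + r) * r \<le> (3/2) * (1/2)" using r by (intro mult_mono) auto
      thus "1/2 + r/2 + (1 + r) * r / 3 \<le> 1" using r by linarith
    qed simp
    finally show ?thesis by simp
  qed
  finally show ?thesis by (simp add: r_def)
qed

lemma ratio_bound:
  fixes w :: complex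
  assumes "w \<noteq> -1" "1 + w * exp (w + 1) \<noteq> 0"
  shows "norm w / norm (1 + w) \<le> max 3 ((3/2) / sqrt (norm (1 + w * exp (w + 1))))"
proof (cases "norm w \<le> 3 * norm (1 + w)")
  case True
  have "norm (1 + w) > 0" using assms(1) by (metis add.commute add_eq_0_iff zero_less_norm_iff)
  hence "norm w / norm (1 + w) \<le> 3" using True by (simp add: divide_le_eq)
  thus ?thesis by simp
next
  case False
  define t where "t = 1 + w"
  have t0: "t \<noteq> 0" using assms(1) by (auto simp: t_def add_eq_0_iff)
  have w: "w = t - 1" by (simp add: t_def)
  have "norm w \<le> norm t + 1" using norm_triangle_ineq4[of t 1] w by simp
  hence tt: "norm t < 1/2" using False t_def by simp
  have f: "1 + w * exp (w + 1) = 1 + (t - 1) * exp t" by (simp add: w)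
  define f where "f = 1 + (t - 1) * exp t"
  have f0: "f \<noteq> 0" using assms(2) f by (simp add: f_def)
  have fb: "norm f \<le> norm t ^ 2" using f_bound[of t] tt by (simp add: f_def)
  have wb: "norm w \<le> 3/2" using \<open>norm w \<le> norm t + 1\<close> tt by simp
  have "norm w * sqrt (norm f) \<le> (3/2) * norm t"
  proof -
    have "(norm w * sqrt (norm f))^2 = norm w ^ 2 * norm f"
      by (simp add: power_mult_distrib)
    also have "\<dots> \<le> (3/2)^2 * norm t ^ 2"
      using wb fb by (intro mult_mono power_mono) auto
    also have "\<dots> = ((3/2) * norm t)^2" by (rule power_mult_distrib[symmetric])
    finally show ?thesis by (rule power2_le_imp_le) simp
  qed
  hence "norm w / norm t \<le> (3/2) / sqrt (norm f)"
    using t0 f0 by (simp add: field_simps)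
  moreover have "f = 1 + w * exp (w + 1)" using f by (simp add: f_def)
  ultimately have "norm w / norm (1 + w) \<le> (3/2) / sqrt (norm (1 + w * exp (w + 1)))"
    by (simp add: t_def)
  thus ?thesis by (simp add: le_max_iff_disj)
qed

lemma exp1_complex: "exp (1::complex) = of_real (exp 1)"
  using exp_of_real[of 1] by simp

lemma LW_ex1:
  fixes z :: complex and k :: int
  assumes z0: "z \<noteq> 0" and ze: "z \<noteq> - 1 / exp 1"
  shows "\<exists>!w. w \<in> LambertW_range k \<and> w * exp w = z"
proof -
  define b where "b = Arg z + 2 * real_of_int k * pi"
  have AZ: "-pi < Arg z" "Arg z \<le> pi" using Arg_bounded[of z] by auto
  have e2: "2 * real_of_int k * pi = 2 * (real_of_int k * pi)" by simp
  have realb: "b = 0 \<or> b = pi \<or> b = -pi"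
    if "w \<in> LambertW_range k" "w * exp w = z" "Im w = 0" for w
  proof -
    define x where "x = Re w"
    have R: "(k = 0 \<and> x \<ge> -1) \<or> (k = -1 \<and> x < -1)" "z = of_real (x * exp x)"
      using real_char[OF that(3), of k z] that by (auto simp: x_def)
    have hx: "x * exp x \<noteq> 0" using R(2) z0 by auto
    show ?thesis
    proof (cases "k = 0")
      case True
      thus ?thesis using R(2) by (simp add: b_def)
    next
      case False
      hence "k = -1" "x < -1" using R(1) by auto
      hence "x * exp x < 0" by (simp add: mult_neg_pos)
      hence "Arg (of_real (x * exp x)) = pi" by (simp only: Arg_of_real if_P)
      hence "Arg z = pi" using R(2) by simp
      thus ?thesis using \<open>k = -1\<close> by (simp add: b_def)
    qed
  qed
  have nrb: "b \<noteq> 0" if "w \<in> LambertW_range k" "w * exp w = z" "Im w \<noteq> 0" for w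
    using nonreal_props(6,7)[OF that(3) z0 that(1,2)] that(3) unfolding b_def
    by (metis linorder_neqE_linordered_idom less_irrefl)
  consider "b \<noteq> 0" "b \<noteq> pi" "b \<noteq> -pi" | "b = 0" | "b = pi \<or> b = -pi" by blast
  thus ?thesis
  proof cases
    case 1
    obtain a where a: "0 < a" "a < \<bar>b\<bar>" "a < pi" "Fb \<bar>b\<bar> a = ln (cmod z)"
    proof -
      have "\<bar>b\<bar> \<noteq> pi" "\<bar>b\<bar> > 0" using 1 by (auto simp: abs_if)
      thus ?thesis using Fb_exists[of "\<bar>b\<bar>" "ln (cmod z)"] that by blast
    qed
    obtain w0 where w0: "Im w0 \<noteq> 0" "w0 \<in> LambertW_range k" "w0 * exp w0 = z"
      using nonreal_exist[of z k a] z0 1 a unfolding b_def by blast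
    show ?thesis
    proof (rule ex1I[of _ w0])
      show "w0 \<in> LambertW_range k \<and> w0 * exp w0 = z" using w0 by auto
    next
      fix w assume w: "w \<in> LambertW_range k \<and> w * exp w = z"
      hence "Im w \<noteq> 0" using realb[of w] 1 by auto
      thus "w = w0" using nonreal_unique[of w w0 z k] w w0 z0 by auto
    qed
  next
    case 2
    have "real_of_int k * pi < pi" "- pi < real_of_int k * pi"
      using 2 AZ unfolding b_def e2 by linarith+
    hence k0: "k = 0" using int_eq_from_pi by blast
    hence "Arg z = 0" using 2 by (simp add: b_def)
    hence zr: "z \<in> \<real>" "0 \<le> Re z" using Arg_eq_0 by auto
    have zc: "z = of_real (Re z)" using zr(1) by (simp add: complex_is_Real_iff complex_eq_iff)
    hence "Re z > 0" using zr z0 by (metis less_eq_real_def of_real_0)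
    then obtain x where x: "x \<ge> 0" "x * exp x = Re z" using h_ex_pos by blast
    show ?thesis
    proof (rule ex1I[of _ "of_real x"])
      show "of_real x \<in> LambertW_range k \<and> of_real x * exp (of_real x) = z"
        using real_char[of "of_real x" k z] x k0 zc by auto
    next
      fix w assume w: "w \<in> LambertW_range k \<and> w * exp w = z"
      hence I: "Im w = 0" using nrb[of w] 2 by auto
      have R: "Re w \<ge> -1" "z = of_real (Re w * exp (Re w))"
        using real_char[OF I, of k z] w k0 by auto
      hence "Re w * exp (Re w) = x * exp x" using x zc by (metis Re_complex_of_real)
      hence "Re w = x" using h_inj_ge[of "Re w" x] R x by auto
      thus "w = of_real x" using I by (simp add: complex_eq_iff)
    qed
  next
    case 3
    have kA: "(b = pi \<longrightarrow> k = 0) \<and> (b = -pi \<longrightarrow> k = -1) \<and> Arg z = pi"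
    proof (cases "b = pi")
      case True
      have "real_of_int k * pi < pi" "- pi < real_of_int k * pi"
        using True AZ unfolding b_def e2 by linarith+
      hence "k = 0" using int_eq_from_pi by blast
      thus ?thesis using True by (simp add: b_def)
    next
      case False
      hence bm: "b = -pi" using 3 by simp
      have e3: "real_of_int (k + 1) * pi = real_of_int k * pi + pi" by (simp add: algebra_simps)
      have "real_of_int (k+1) * pi < pi" "- pi < real_of_int (k+1) * pi"
        using bm AZ unfolding b_def e2 e3 by linarith+
      hence "k + 1 = 0" using int_eq_from_pi by blast
      hence "k = -1" by simp
      moreover have "Arg z = pi" using bm \<open>k = -1\<close> by (simp add: b_def)
      ultimately show ?thesis using False by simp
    qed
    hence "Re z < 0" "Im z = 0" using Arg_eq_pi by auto
    define c where "c = Re z"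
    have zc: "z = of_real c" using \<open>Im z = 0\<close> by (simp add: c_def complex_eq_iff)
    have c0: "c < 0" using \<open>Re z < 0\<close> c_def by simp
    have cz: "cmod z = - c" using zc c0 by simp
    have ce: "c \<noteq> - 1 / exp 1"
    proof
      assume "c = - 1 / exp 1"
      hence "z = of_real (- 1 / exp 1)" using zc by simp
      also have "\<dots> = - 1 / exp 1" by (simp add: exp1_complex)
      finally show False using ze by simp
    qed
    have bab: "\<bar>b\<bar> = pi" using 3 by auto
    have lnz: "ln (cmod z) > -1 \<longleftrightarrow> c < - 1 / exp 1"
    proof -
      have "ln (cmod z) > -1 \<longleftrightarrow> exp (-1) < - c" using cz c0
        by (metis exp_less_cancel_iff exp_ln neg_0_less_iff_less)
      also have "\<dots> \<longleftrightarrow> c < - 1 / exp 1" by (simp add: exp_minus field_simps)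
      finally show ?thesis .
    qed
    show ?thesis
    proof (cases "c > - 1 / exp 1")
      case True
      have nonr: "Im w = 0" if w: "w \<in> LambertW_range k \<and> w * exp w = z" for w
      proof (rule ccontr)
        assume I: "Im w \<noteq> 0"
        note NP = nonreal_props[OF I z0, of k] w
        have "Fb pi \<bar>Arg w\<bar> > -1" using Fb_pi_gt[of "\<bar>Arg w\<bar>"] NP by auto
        hence "ln (cmod z) > -1" using NP bab unfolding b_def by auto
        thus False using lnz True by simp
      qed
      show ?thesis
      proof (cases "b = pi")
        case True
        hence k0: "k = 0" using kA by simp
        obtain x where x: "-1 < x" "x < 0" "x * exp x = c" using h_ex_mid[of c] \<open>c > - 1 / exp 1\<close> c0 by blast
        show ?thesis
        proof (rule ex1I[of _ "of_real x"])
          show "of_real x \<in> LambertW_range k \<and> of_real x * exp (of_real x) = z"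
            using real_char[of "of_real x" k z] x k0 zc by auto
        next
          fix w assume w: "w \<in> LambertW_range k \<and> w * exp w = z"
          hence I: "Im w = 0" using nonr by blast
          have R: "Re w \<ge> -1" "z = of_real (Re w * exp (Re w))"
            using real_char[OF I, of k z] w k0 by auto
          hence "Re w * exp (Re w) = x * exp x" using x zc by (metis Re_complex_of_real)
          hence "Re w = x" using h_inj_ge[of "Re w" x] R x by auto
          thus "w = of_real x" using I by (simp add: complex_eq_iff)
        qed
      next
        case False
        hence k0: "k = -1" using kA 3 by simp
        obtain x where x: "x < -1" "x * exp x = c" using h_ex_left[of c] \<open>c > - 1 / exp 1\<close> c0 by blast
        show ?thesis
        proof (rule ex1I[of _ "of_real x"])
          show "of_real x \<in> LambertW_range k \<and> of_real x * exp (of_real x) = z"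
            using real_char[of "of_real x" k z] x k0 zc by auto
        next
          fix w assume w: "w \<in> LambertW_range k \<and> w * exp w = z"
          hence I: "Im w = 0" using nonr by blast
          have R: "Re w < -1" "z = of_real (Re w * exp (Re w))"
            using real_char[OF I, of k z] w k0 by auto
          hence "Re w * exp (Re w) = x * exp x" using x zc by (metis Re_complex_of_real)
          hence "Re w = x" using h_inj_lt[of "Re w" x] R x by auto
          thus "w = of_real x" using I by (simp add: complex_eq_iff)
        qed
      qed
    next
      case False
      hence clt: "c < - 1 / exp 1" using ce by simp
      have nonr: "Im w \<noteq> 0" if w: "w \<in> LambertW_range k \<and> w * exp w = z" for w
      proof
        assume I: "Im w = 0"
        have "z = of_real (Re w * exp (Re w))" using real_char[OF I, of k z] w by auto
        hence "c = Re w * exp (Re w)" using zc by (metis Re_complex_of_real)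
        thus False using h_ge[of "Re w"] clt by simp
      qed
      obtain a where a: "0 < a" "a < pi" "Fb pi a = ln (cmod z)"
        using Fb_exists_pi[of "ln (cmod z)"] lnz clt by auto
      have "b \<noteq> 0" using 3 by auto
      then obtain w0 where w0: "Im w0 \<noteq> 0" "w0 \<in> LambertW_range k" "w0 * exp w0 = z"
        using nonreal_exist[of z k a] z0 a bab unfolding b_def by auto
      show ?thesis
      proof (rule ex1I[of _ w0])
        show "w0 \<in> LambertW_range k \<and> w0 * exp w0 = z" using w0 by auto
      next
        fix w assume w: "w \<in> LambertW_range k \<and> w * exp w = z"
        thus "w = w0" using nonr[OF w] nonreal_unique[of w w0 z k] w0 z0 by auto
      qed
    qed
  qed
qed

theorem theorem6:
  fixes k :: int and z :: complex
  assumes "z \<noteq> 0" and "z \<noteq> - 1 / exp 1"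
  shows "norm (LambertW_deriv k z)
           \<le> (1 / norm z) * max 3 ((3/2) / sqrt (norm (exp 1 * z + 1)))"
proof -
  define W where "W = LambertW k z"
  have "W \<in> LambertW_range k \<and> W * exp W = z"
    unfolding W_def LambertW_def by (rule theI'[OF LW_ex1[OF assms]])
  hence Wz: "W * exp W = z" by simp
  have em: "exp 1 * z + 1 = 1 + W * exp (W + 1)"
    using Wz by (simp add: exp_add algebra_simps)
  have W1: "W \<noteq> -1"
  proof
    assume "W = -1"
    hence "z = - exp (-1)" using Wz by simp
    also have "\<dots> = - 1 / exp 1" by (simp add: exp_minus field_simps)
    finally show False using assms(2) by simp
  qed
  have f0: "1 + W * exp (W + 1) \<noteq> 0"
  proof
    assume "1 + W * exp (W + 1) = 0"
    hence e0: "exp 1 * z + 1 = 0" using em by simp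
    have "exp 1 * z = (exp 1 * z + 1) - 1" by simp
    hence "exp 1 * z = -1" unfolding e0 by simp
    hence "z = - 1 / exp 1" by (simp add: field_simps)
    thus False using assms(2) by simp
  qed
  have "norm (LambertW_deriv k z) = (1 / norm z) * (norm W / norm (1 + W))"
    unfolding LambertW_deriv_def W_def[symmetric] by (simp add: norm_divide norm_mult)
  also have "\<dots> \<le> (1 / norm z) * max 3 ((3/2) / sqrt (norm (1 + W * exp (W + 1))))"
    by (intro mult_left_mono ratio_bound W1 f0) simp
  also have "\<dots> = (1 / norm z) * max 3 ((3/2) / sqrt (norm (exp 1 * z + 1)))"
    by (simp only: em)
  finally show ?thesis .
qed

end
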